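(* Let $S$ be a finite poset which contains a subposet (with induced order) isomorphic to $V$ but no subposet isomorphic to $W^4$. Then $C(f_S)\ne\varnothing$.
   Context: $f_S(x)=\sum_i x_i^2+\sum_{s_i<s_j}x_ix_j$. $H_n=\{x:\sum x_i=0\}$; $C(f)$ is the set of $h\in H_n\setminus\{0\}$ with either all $\partial f/\partial x_i(h)\le0$ or all $\ge0$. $V=\{h^-,h_1,h_2,h^+\}$ with $h^-<h_1<h^+$, $h^-<h_2<h^+$, $h_1,h_2$ incomparable. $W^4=\{a_1,a_2,b_1,b_2\}$ with only strict relations $a_1<b_1$, $a_1<b_2$, $a_2<b_1$, $a_2<b_2$. *)

theory Defs
  imports "HOL-Analysis.Analysis"
begin

text \<open>A finite poset S is a finite subset of a type with a partial order (induced order).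
 Vectors x in R^S are functions 'a => real (values outside S are irrelevant).\<close>

definition fS :: "'a::order set \<Rightarrow> ('a \<Rightarrow> real) \<Rightarrow> real" where
  "fS S x = (\<Sum>i\<in>S. (x i)^2) + (\<Sum>p\<in>{(i,j). i \<in> S \<and> j \<in> S \<and> i < j}. x (fst p) * x (snd p))"

definition partial :: "(('a \<Rightarrow> real) \<Rightarrow> real) \<Rightarrow> 'a \<Rightarrow> ('a \<Rightarrow> real) \<Rightarrow> real" where
  "partial f k x = deriv (\<lambda>t. f (x(k := x k + t))) 0"

definition Cset :: "'a set \<Rightarrow> (('a \<Rightarrow> real) \<Rightarrow> real) \<Rightarrow> ('a \<Rightarrow> real) set" where
  "Cset S f = {h. (\<forall>i. i \<notin> S \<longrightarrow> h i = 0) \<and> (\<Sum>i\<in>S. h i) = 0 \<and> (\<exists>i\<in>S. h i \<noteq> 0) \<and>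
      ((\<forall>k\<in>S. partial f k h \<le> 0) \<or> (\<forall>k\<in>S. partial f k h \<ge> 0))}"

definition contains_V :: "'a::order set \<Rightarrow> bool" where
  "contains_V S = (\<exists>m a b p. m \<in> S \<and> a \<in> S \<and> b \<in> S \<and> p \<in> S \<and>
      m < a \<and> a < p \<and> m < b \<and> b < p \<and> \<not> a \<le> b \<and> \<not> b \<le> a)"

definition contains_W4 :: "'a::order set \<Rightarrow> bool" where
  "contains_W4 S = (\<exists>a1 a2 b1 b2. a1 \<in> S \<and> a2 \<in> S \<and> b1 \<in> S \<and> b2 \<in> S \<and>
      a1 < b1 \<and> a1 < b2 \<and> a2 < b1 \<and> a2 < b2 \<and>
      \<not> a1 \<le> a2 \<and> \<not> a2 \<le> a1 \<and> \<not> b1 \<le> b2 \<and> \<not> b2 \<le> b1)"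

end

theory Submission
  imports Defs
begin

lemma deriv_fS:
  fixes S :: "'a::order set" and x :: "'a \<Rightarrow> real"
  shows "partial (fS S) k x =
    (\<Sum>i\<in>S. 2 * x i * (if i = k then 1 else 0)) +
    (\<Sum>p\<in>{(i,j). i \<in> S \<and> j \<in> S \<and> i < j}.
        (if fst p = k then 1 else 0) * x (snd p) + x (fst p) * (if snd p = k then 1 else 0))"
proof -
  define d where "d i = (if i = k then 1 else (0::real))" for i
  let ?y = "\<lambda>t i. x i + t * d i"
  have eq: "(\<lambda>t. fS S (x(k := x k + t))) = (\<lambda>t. (\<Sum>i\<in>S. (?y t i)^2) +
     (\<Sum>p\<in>{(i,j). i \<in> S \<and> j \<in> S \<and> i < j}. ?y t (fst p) * ?y t (snd p)))"
  proof -
    have yy: "(x(k := x k + t)) i = ?y t i" for t i by (simp add: d_def)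
    show ?thesis unfolding fS_def yy by simp
  qed
  have "((\<lambda>t. (\<Sum>i\<in>S. (?y t i)^2) +
     (\<Sum>p\<in>{(i,j). i \<in> S \<and> j \<in> S \<and> i < j}. ?y t (fst p) * ?y t (snd p))) has_real_derivative
    ((\<Sum>i\<in>S. 2 * x i * d i) +
    (\<Sum>p\<in>{(i,j). i \<in> S \<and> j \<in> S \<and> i < j}.
        d (fst p) * x (snd p) + x (fst p) * d (snd p)))) (at 0)"
    by (auto intro!: derivative_eq_intros sum.cong simp: mult_ac)
  then show ?thesis unfolding partial_def eq d_def by (rule DERIV_imp_deriv)
qed

lemma partial_fS:
  fixes S :: "'a::order set" and x :: "'a \<Rightarrow> real"
  assumes "finite S" "k \<in> S"
  shows "partial (fS S) k x = 2 * x k + (\<Sum>j\<in>{j\<in>S. k<j}. x j) + (\<Sum>j\<in>{j\<in>S. j<k}. x j)"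
proof -
  have P: "{(i,j). i \<in> S \<and> j \<in> S \<and> i < j} = Sigma S (\<lambda>i. {j\<in>S. i<j})" by auto
  have fin: "finite {j\<in>S. i<j}" for i using assms(1) by simp
  have A: "(\<Sum>i\<in>S. 2 * x i * (if i = k then 1 else 0)) = 2 * x k"
    using assms by (simp add: if_distrib sum.delta' cong: if_cong)
  have B: "(\<Sum>i\<in>S. \<Sum>j\<in>{j\<in>S. i<j}. (if i = k then 1 else 0) * x j) = (\<Sum>j\<in>{j\<in>S. k<j}. x j)"
  proof -
    have "(\<Sum>j\<in>{j\<in>S. i<j}. (if i = k then 1 else 0) * x j) = (if i = k then (\<Sum>j\<in>{j\<in>S. k<j}. x j) else 0)" for i
      by simp
    then show ?thesis using assms by (simp add: sum.delta')
  qed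
  have C: "(\<Sum>i\<in>S. \<Sum>j\<in>{j\<in>S. i<j}. x i * (if j = k then 1 else 0)) = (\<Sum>j\<in>{j\<in>S. j<k}. x j)"
  proof -
    have "(\<Sum>j\<in>{j\<in>S. i<j}. x i * (if j = k then 1 else 0)) = (if i < k then x i else 0)" if "i \<in> S" for i
      using assms by (simp add: sum.delta' if_distrib[of "\<lambda>c. x i * c"] cong: if_cong)
    then have "(\<Sum>i\<in>S. \<Sum>j\<in>{j\<in>S. i<j}. x i * (if j = k then 1 else 0)) = (\<Sum>i\<in>S. if i < k then x i else 0)"
      by (rule sum.cong[OF refl])
    then show ?thesis using assms by (simp add: sum.inter_filter)
  qed
  have S1: "(\<Sum>p\<in>Sigma S (\<lambda>i. {j\<in>S. i<j}). g p) = (\<Sum>i\<in>S. \<Sum>j\<in>{j\<in>S. i<j}. g (i,j))" for g :: "'a \<times> 'a \<Rightarrow> real"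
    using sum.Sigma[of S "\<lambda>i. {j\<in>S. i<j}" "\<lambda>i j. g (i,j)"] assms fin by (simp add: split_def)
  show ?thesis unfolding deriv_fS P sum.distrib S1
    using A B C by simp
qed
lemma sum_h:
  fixes A :: "'a set"
  assumes "finite A"
  shows "(\<Sum>j\<in>A. (if j=a then 1 else 0) + (if j=b then 1 else 0) - (if j=m then 1 else 0) - (if j=p then (1::real) else 0))
     = (if a \<in> A then 1 else 0) + (if b \<in> A then 1 else 0) - (if m \<in> A then 1 else 0) - (if p \<in> A then 1 else 0)"
  using assms by (simp add: sum.distrib sum_subtractf sum.delta')

theorem lemma9:
  fixes S :: "'a::order set"
  assumes "finite S" and "contains_V S" and "\<not> contains_W4 S"
  shows "Cset S (fS S) \<noteq> {}"
proof -
  obtain m a b p where V: "m \<in> S" "a \<in> S" "b \<in> S" "p \<in> S"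
      "m < a" "a < p" "m < b" "b < p" "\<not> a \<le> b" "\<not> b \<le> a"
    using assms(2) unfolding contains_V_def by blast
  define h where "h j = (if j=a then 1 else 0) + (if j=b then 1 else 0) - (if j=m then 1 else 0) - (if j=p then (1::real) else 0)" for j
  have dist: "a \<noteq> b" "a \<noteq> m" "a \<noteq> p" "b \<noteq> m" "b \<noteq> p" "m \<noteq> p"
    using V by auto
  have W: "\<not> (k < a \<and> k < b \<and> \<not> k \<le> m \<and> \<not> m \<le> k)" if "k \<in> S" for k
    using assms(3) V that unfolding contains_W4_def by blast
  have W': "\<not> (a < k \<and> b < k \<and> \<not> k \<le> p \<and> \<not> p \<le> k)" if "k \<in> S" for k
    using assms(3) V that unfolding contains_W4_def by blast
  have "h \<in> Cset S (fS S)"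
  proof -
    have "\<forall>i. i \<notin> S \<longrightarrow> h i = 0" using V by (auto simp: h_def)
    moreover have "(\<Sum>i\<in>S. h i) = 0" unfolding h_def using sum_h[OF assms(1)] V by simp
    moreover have "\<exists>i\<in>S. h i \<noteq> 0" using V dist by (auto simp: h_def)
    moreover have "\<forall>k\<in>S. partial (fS S) k h \<le> 0"
    proof
      fix k assume k: "k \<in> S"
      have fin: "finite {j\<in>S. k<j}" "finite {j\<in>S. j<k}" using assms(1) by auto
      show "partial (fS S) k h \<le> 0"
        unfolding partial_fS[OF assms(1) k] unfolding h_def sum_h[OF fin(1)] sum_h[OF fin(2)]
        using V W[OF k] W'[OF k] dist
        by (auto split: if_splits dest: order.strict_trans order.strict_trans1 order.strict_trans2)
    qed
    ultimately show ?thesis unfolding Cset_def by blast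
  qed
  then show ?thesis by blast
qed
end
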